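(* Define \[ \omega(z;q):=\sum_{n=0}^{\infty} \frac{z^n q^{2n^2+2n}}{(q;q^2)_{n+1}\,(zq;q^2)_{n+1}}. \] Then, as formal power series in $q$ whose coefficients are polynomials in $z$ (equivalently, for $|q|<1$ and $|z|$ sufficiently small), \[ \omega(z;q)=\sum_{n=0}^{\infty} \frac{q^n}{(zq;q^2)_{n+1}}. \]
   Context: For $a$ and $q$, $(a;q)_0:=1$, $(a;q)_n:=(1-a)(1-aq)\cdots(1-aq^{n-1})$ for $n\ge1$. *)

theory Defs
  imports Complex_Main
begin

definition qpoch :: "complex \<Rightarrow> complex \<Rightarrow> nat \<Rightarrow> complex" where
  "qpoch a q n = (\<Prod>k<n. (1 - a * q ^ k))"

definition omega_term :: "complex \<Rightarrow> complex \<Rightarrow> nat \<Rightarrow> complex" where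
  "omega_term z q n = z ^ n * q ^ (2 * n\<^sup>2 + 2 * n) /
       (qpoch q (q\<^sup>2) (n + 1) * qpoch (z * q) (q\<^sup>2) (n + 1))"

definition omega :: "complex \<Rightarrow> complex \<Rightarrow> complex" where
  "omega z q = (\<Sum>n. omega_term z q n)"

end

theory Submission
  imports Defs
begin

lemma prod_one_minus_ge:
  fixes a :: "nat \<Rightarrow> real"
  assumes "\<And>k. 0 \<le> a k" "\<And>k. a k \<le> 1"
  shows "(\<Prod>k<n. (1 - a k)) \<ge> 1 - (\<Sum>k<n. a k) \<and> 0 \<le> (\<Prod>k<n. (1 - a k)) \<and> (\<Prod>k<n. (1 - a k)) \<le> 1"
proof (induction n)
  case 0 then show ?case by simp
next
  case (Suc n)
  define P where "P = (\<Prod>k<n. (1 - a k))"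
  have P: "1 - (\<Sum>k<n. a k) \<le> P" "0 \<le> P" "P \<le> 1" using Suc by (auto simp: P_def)
  have "P * a n \<le> a n" using mult_right_mono[of P 1 "a n"] P assms[of n] by simp
  then have "P * (1 - a n) \<ge> P - a n" by (simp add: algebra_simps)
  moreover have "0 \<le> P * (1 - a n)" using P assms[of n] by simp
  moreover have "P * (1 - a n) \<le> 1" using P assms[of n]
    using mult_left_le[of "1 - a n" P] by simp
  ultimately show ?case using P by (simp add: P_def[symmetric])
qed

lemma norm_prod_ge:
  fixes c :: "nat \<Rightarrow> complex"
  assumes "\<And>k. norm (c k) \<le> 1"
  shows "norm (\<Prod>k<n. (1 - c k)) \<ge> (\<Prod>k<n. (1 - norm (c k)))"
proof -
  have "(\<Prod>k<n. (1 - norm (c k))) \<le> (\<Prod>k<n. norm (1 - c k))"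
  proof (rule prod_mono)
    fix k show "0 \<le> 1 - norm (c k) \<and> 1 - norm (c k) \<le> norm (1 - c k)"
      using assms[of k] norm_triangle_ineq2[of 1 "c k"] by simp
  qed
  then show ?thesis by (simp add: prod_norm)
qed

lemma qpoch_Suc: "qpoch a b (Suc n) = qpoch a b n * (1 - a * b ^ n)"
  by (simp add: qpoch_def)

lemma qpoch_shift: "qpoch (w * q) (q\<^sup>2) (Suc n) = (1 - w * q) * qpoch (w * q ^ 3) (q\<^sup>2) n"
proof -
  have h: "\<And>i. w * q * (q\<^sup>2) ^ Suc i = w * q ^ 3 * (q\<^sup>2) ^ i"
    by (simp add: power_Suc eval_nat_numeral)
  show ?thesis unfolding qpoch_def prod.lessThan_Suc_shift h power_0 mult_1_right ..
qed

lemma qpoch_lower1: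
  assumes q: "norm q < 1" and w: "norm w \<le> (1 - norm q) / 2"
  shows "norm (qpoch (w * q) (q\<^sup>2) n) \<ge> 1/2"
proof -
  define s where "s = norm q"
  have s0: "0 \<le> s" and s1: "s < 1" using q by (auto simp: s_def)
  define a where "a k = norm w * s ^ (2*k+1)" for k
  have nc: "norm (w * q * (q\<^sup>2) ^ k) = a k" for k
    by (simp add: a_def s_def norm_mult norm_power power_mult[symmetric] power_add mult_ac)
  have ak: "a k \<le> (1 - s)/2 * s ^ k" for k
  proof -
    have sk: "s ^ (2*k+1) \<le> s ^ k" using s0 s1 by (intro power_decreasing) auto
    have w': "norm w \<le> (1 - s)/2" using w by (simp add: s_def)
    show ?thesis unfolding a_def
      by (rule mult_mono[OF w' sk]) (use s0 s1 in auto)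
  qed
  have a0: "0 \<le> a k" for k using s0 by (simp add: a_def)
  have a1: "a k \<le> 1" for k
  proof -
    have "s ^ k \<le> 1" using s0 s1 by (simp add: power_le_one)
    then have "(1 - s)/2 * s ^ k \<le> (1 - s)/2" using s1 mult_left_le[of "s ^ k" "(1 - s)/2"] by simp
    then have "(1 - s)/2 * s ^ k \<le> 1" by (rule order_trans) (use s0 in simp)
    with ak[of k] show ?thesis by linarith
  qed
  have "(\<Sum>k<n. a k) \<le> (\<Sum>k<n. (1 - s)/2 * s ^ k)" by (intro sum_mono ak)
  also have "\<dots> = (1 - s)/2 * ((1 - s ^ n) / (1 - s))"
    using s1 by (subst sum_distrib_left[symmetric]) (simp add: sum_gp_strict)
  also have "\<dots> = (1 - s ^ n)/2" using s1 by (simp add: field_simps)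
  also have "\<dots> \<le> 1/2" using s0 by simp
  finally have sa: "(\<Sum>k<n. a k) \<le> 1/2" .
  have "1/2 \<le> (\<Prod>k<n. (1 - a k))" using prod_one_minus_ge[of a n, OF a0 a1] sa by linarith
  also have "\<dots> = (\<Prod>k<n. (1 - norm (w * q * (q\<^sup>2) ^ k)))" by (simp add: nc)
  also have "\<dots> \<le> norm (\<Prod>k<n. (1 - w * q * (q\<^sup>2) ^ k))"
    by (rule norm_prod_ge) (simp add: nc a1)
  finally show ?thesis by (simp add: qpoch_def)
qed

lemma qpoch_lower2:
  assumes q: "norm q < 1"
  shows "norm (qpoch q (q\<^sup>2) n) \<ge> (1 - norm q) ^ n"
proof -
  have nc: "norm (q * (q\<^sup>2) ^ k) = norm q ^ (2*k+1)" for k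
    by (simp add: norm_mult norm_power power_mult[symmetric] power_add mult_ac)
  have le: "norm q ^ (2*k+1) \<le> norm q" for k
    using q by (simp add: power_le_one mult_left_le)
  have "(1 - norm q) ^ n = (\<Prod>k<n. (1 - norm q))" by simp
  also have "\<dots> \<le> (\<Prod>k<n. (1 - norm (q * (q\<^sup>2) ^ k)))"
    by (intro prod_mono) (use q le in \<open>auto simp: nc\<close>)
  also have "\<dots> \<le> norm (\<Prod>k<n. (1 - q * (q\<^sup>2) ^ k))"
  proof (rule norm_prod_ge)
    fix k show "norm (q * (q\<^sup>2) ^ k) \<le> 1" unfolding nc using le[of k] q by linarith
  qed
  finally show ?thesis by (simp add: qpoch_def)
qed

lemma tele_alg0:
  fixes wn a x P Q w q u v t :: complex
  assumes "P \<noteq> 0" "u \<noteq> 0" "t \<noteq> 0" "Q \<noteq> 0" "v \<noteq> 0"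
    and u: "u = 1 - q*x" and v: "v = 1 - w*q^3*x"
  shows "wn*a/(P*u*(t*Q)) * t - q*(wn*x*a/(P*u*(Q*v)))
       = wn*a/(P*Q) - w*wn*(a*q^4*x^2)/(P*u*(Q*v))"
proof -
  have h1: "wn*a/(P*u*(t*Q)) * t = wn*a*v/(P*u*(Q*v))" using assms(1-5) by (simp add: field_simps)
  have h2: "wn*a/(P*Q) = wn*a*u*v/(P*u*(Q*v))" using assms(1-5) by (simp add: field_simps)
  have h3: "wn*a*v - q*(wn*x*a) = wn*a*u*v - w*wn*(a*q^4*x^2)"
    unfolding u v by (simp add: algebra_simps power2_eq_square numeral_eq_Suc)
  have "wn*a/(P*u*(t*Q)) * t - q*(wn*x*a/(P*u*(Q*v))) = wn*a*v/(P*u*(Q*v)) - q*(wn*x*a)/(P*u*(Q*v))"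
    by (simp only: h1 times_divide_eq_right)
  also have "\<dots> = (wn*a*v - q*(wn*x*a))/(P*u*(Q*v))" by (rule diff_divide_distrib[symmetric])
  also have "\<dots> = (wn*a*u*v - w*wn*(a*q^4*x^2))/(P*u*(Q*v))" by (simp only: h3)
  also have "\<dots> = wn*a*u*v/(P*u*(Q*v)) - w*wn*(a*q^4*x^2)/(P*u*(Q*v))" by (rule diff_divide_distrib)
  finally show ?thesis by (simp only: h2)
qed

lemma tele_alg:
  fixes wn a x P Q w q :: complex
  assumes "P \<noteq> 0" "1 - q*x \<noteq> 0" "1 - w*q \<noteq> 0" "Q \<noteq> 0" "1 - w*q^3*x \<noteq> 0"
  shows "wn*a/(P*(1-q*x)*((1-w*q)*Q)) * (1-w*q) - q*(wn*x*a/(P*(1-q*x)*(Q*(1-w*q^3*x))))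
       = wn*a/(P*Q) - w*wn*(a*q^4*x^2)/(P*(1-q*x)*(Q*(1-w*q^3*x)))"
  by (rule tele_alg0) (use assms in auto)

definition Cf :: "complex \<Rightarrow> complex \<Rightarrow> nat \<Rightarrow> complex" where
  "Cf q w n = w ^ n * q ^ (2 * n\<^sup>2 + 2 * n) / (qpoch q (q\<^sup>2) n * qpoch (w * q ^ 3) (q\<^sup>2) n)"

lemma term_id:
  assumes q: "norm q < 1" and w: "norm w \<le> (1 - norm q) / 2"
  shows "omega_term w q n * (1 - w*q) - q * omega_term (w*q\<^sup>2) q n = Cf q w n - Cf q w (Suc n)"
proof -
  define P where "P = qpoch q (q\<^sup>2) n"
  define Q where "Q = qpoch (w * q ^ 3) (q\<^sup>2) n"
  define x where "x = (q\<^sup>2) ^ n"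
  define a where "a = q ^ (2 * n\<^sup>2 + 2 * n)"
  have w2: "norm (w * q\<^sup>2) \<le> (1 - norm q) / 2"
  proof -
    have "norm (q\<^sup>2) \<le> 1" using q by (simp add: norm_power power_le_one)
    then have "norm (w * q\<^sup>2) \<le> norm w" by (simp add: norm_mult mult_left_le)
    with w show ?thesis by linarith
  qed
  have e1: "w * q\<^sup>2 * q = w * q ^ 3" by (simp add: eval_nat_numeral)
  have P1: "qpoch q (q\<^sup>2) (n + 1) = P * (1 - q * x)" by (simp add: qpoch_Suc P_def x_def)
  have Q1: "qpoch (w * q) (q\<^sup>2) (n + 1) = (1 - w * q) * Q" by (simp add: qpoch_shift Q_def)
  have Q2: "qpoch (w * q\<^sup>2 * q) (q\<^sup>2) (n + 1) = Q * (1 - w * q ^ 3 * x)"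
    unfolding e1 by (simp add: qpoch_Suc Q_def x_def)
  have Q2': "qpoch (w * q ^ 3) (q\<^sup>2) (Suc n) = Q * (1 - w * q ^ 3 * x)"
    using Q2 unfolding e1 by simp
  have P1': "qpoch q (q\<^sup>2) (Suc n) = P * (1 - q * x)" using P1 by simp
  have nzP: "P * (1 - q * x) \<noteq> 0"
  proof -
    have "0 < (1 - norm q) ^ (n+1)" using q by simp
    with qpoch_lower2[OF q, of "n+1"] P1 show ?thesis by auto
  qed
  have nzQ1: "(1 - w * q) * Q \<noteq> 0" using qpoch_lower1[OF q w, of "n+1"] Q1 by auto
  have nzQ2: "Q * (1 - w * q ^ 3 * x) \<noteq> 0" using qpoch_lower1[OF q w2, of "n+1"] Q2 by auto
  have pw1: "(w * q\<^sup>2) ^ n = w ^ n * x" by (simp add: x_def power_mult_distrib)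
  have pw2: "q ^ (2 * (Suc n)\<^sup>2 + 2 * Suc n) = a * q^4 * x^2"
  proof -
    have ex: "2 * (Suc n)\<^sup>2 + 2 * Suc n = (2 * n\<^sup>2 + 2 * n) + 4 + 2 * n * 2"
      by (simp add: power2_eq_square algebra_simps)
    have "a * q^4 * x^2 = q ^ ((2 * n\<^sup>2 + 2 * n) + 4 + 2 * n * 2)"
      unfolding a_def x_def power_mult[symmetric] power_add ..
    then show ?thesis by (subst ex) (rule sym)
  qed
  have "omega_term w q n * (1 - w*q) - q * omega_term (w*q\<^sup>2) q n
     = w^n*a/(P*(1-q*x)*((1-w*q)*Q)) * (1-w*q) - q*(w^n*x*a/(P*(1-q*x)*(Q*(1-w*q^3*x))))"
    unfolding omega_term_def P1 Q1 Q2 pw1 a_def[symmetric] ..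
  also have "\<dots> = w^n*a/(P*Q) - w*w^n*(a*q^4*x^2)/(P*(1-q*x)*(Q*(1-w*q^3*x)))"
    by (rule tele_alg) (use nzP nzQ1 nzQ2 in auto)
  also have "\<dots> = Cf q w n - Cf q w (Suc n)"
    unfolding Cf_def P1' Q2' pw2 P_def[symmetric] Q_def[symmetric] a_def[symmetric] power_Suc ..
  finally show ?thesis .
qed

definition Mj :: "complex \<Rightarrow> nat \<Rightarrow> real" where
  "Mj q n = 2 * norm q ^ (2 * n\<^sup>2 + 2 * n) / (1 - norm q) ^ (n + 1)"

lemma Mj_summable:
  assumes q: "norm q < 1"
  shows "summable (Mj q)"
proof -
  define s where "s = norm q"
  have s0: "0 \<le> s" and s1: "s < 1" using q by (auto simp: s_def)
  obtain N where N: "s ^ N < (1 - s) / 2" using real_arch_pow_inv[of "(1 - s)/2" s] s1 by auto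
  show ?thesis
  proof (rule summable_ratio_test[of "1/2" N])
    fix n assume n: "N \<le> n"
    have ex: "2 * (Suc n)\<^sup>2 + 2 * Suc n = (2 * n\<^sup>2 + 2 * n) + (4 * n + 4)"
      by (simp add: power2_eq_square algebra_simps)
    have "s ^ (4 * n + 4) \<le> s ^ N" using s0 s1 n by (intro power_decreasing) auto
    then have sl: "s ^ (4 * n + 4) / (1 - s) \<le> 1/2" using N s1 by (simp add: field_simps)
    have p1: "s ^ (2 * (Suc n)\<^sup>2 + 2 * Suc n) = s ^ (2 * n\<^sup>2 + 2 * n) * s ^ (4 * n + 4)"
      by (simp only: ex power_add)
    have p2: "(1 - s) ^ (Suc n + 1) = (1 - s) ^ (n + 1) * (1 - s)" by simp
    have gen: "\<And>E G H T::real. 2 * (E * G) / (H * T) = 2 * E / H * (G / T)" by simp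
    have "Mj q (Suc n) = Mj q n * (s ^ (4 * n + 4) / (1 - s))"
      unfolding Mj_def s_def[symmetric] p1 p2 by (rule gen)
    also have "\<dots> \<le> Mj q n * (1/2)"
      by (rule mult_left_mono[OF sl]) (use s0 s1 in \<open>simp add: Mj_def s_def[symmetric]\<close>)
    finally show "norm (Mj q (Suc n)) \<le> 1/2 * norm (Mj q n)"
      using s0 s1 by (simp add: Mj_def s_def[symmetric] mult.commute)
  qed simp
qed

lemma w2_bound:
  fixes q w :: complex
  assumes q: "norm q < 1" and w: "norm w \<le> (1 - norm q) / 2"
  shows "norm (w * q\<^sup>2) \<le> (1 - norm q) / 2"
proof -
  have "norm (q\<^sup>2) \<le> 1" using q by (simp add: norm_power power_le_one)
  then have "norm (w * q\<^sup>2) \<le> norm w" by (simp add: norm_mult mult_left_le)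
  with w show ?thesis by linarith
qed

lemma wpow_bound:
  fixes q w :: complex
  assumes q: "norm q < 1" and w: "norm w \<le> (1 - norm q) / 2"
  shows "norm (w * (q\<^sup>2) ^ N) \<le> (1 - norm q) / 2"
proof -
  have "norm ((q\<^sup>2) ^ N) \<le> 1" using q by (simp add: norm_power power_le_one)
  then have "norm (w * (q\<^sup>2) ^ N) \<le> norm w" by (simp add: norm_mult mult_left_le)
  with w show ?thesis by linarith
qed

lemma half_aux: "0 \<le> (x::real) \<Longrightarrow> (1 - x) / 2 \<le> 1" by auto

lemma gen_bound:
  fixes q w A B :: complex
  assumes q: "norm q < 1" and w: "norm w \<le> (1 - norm q) / 2"
    and A: "norm A \<ge> (1 - norm q) ^ m" and B: "norm B \<ge> 1/2" and m: "m \<le> n + 1"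
  shows "norm (w ^ n * q ^ (2 * n\<^sup>2 + 2 * n) / (A * B)) \<le> Mj q n"
proof -
  define s where "s = norm q"
  have s0: "0 \<le> s" and s1: "s < 1" using q by (auto simp: s_def)
  have "(1 - norm q) / 2 \<le> 1" using half_aux[OF norm_ge_zero[of q]] .
  with w have wl: "norm w \<le> 1" by (rule order_trans)
  have "(1 - s) ^ (n + 1) \<le> (1 - s) ^ m" using s0 s1 m by (intro power_decreasing) auto
  then have A': "norm A \<ge> (1 - s) ^ (n+1)" using A by (simp add: s_def)
  have pos: "0 < (1 - s) ^ (n+1) / 2" using s1 by simp
  have den: "(1 - s) ^ (n+1) / 2 \<le> norm A * norm B"
    using mult_mono[OF A' B] s0 s1 by simp
  have num: "norm w ^ n * s ^ (2 * n\<^sup>2 + 2 * n) \<le> s ^ (2 * n\<^sup>2 + 2 * n)"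
    using s0 wl by (simp add: mult_left_le_one_le power_le_one)
  have "norm (w ^ n * q ^ (2 * n\<^sup>2 + 2 * n) / (A * B))
      = norm w ^ n * s ^ (2 * n\<^sup>2 + 2 * n) / (norm A * norm B)"
    by (simp add: s_def norm_mult norm_divide norm_power)
  also have "\<dots> \<le> s ^ (2 * n\<^sup>2 + 2 * n) / ((1 - s) ^ (n+1) / 2)"
    by (rule frac_le[OF _ num pos den]) (use s0 in simp)
  also have "\<dots> = Mj q n" by (simp add: Mj_def s_def)
  finally show ?thesis .
qed

lemma term_bound:
  assumes q: "norm q < 1" and w: "norm w \<le> (1 - norm q) / 2"
  shows "norm (omega_term w q n) \<le> Mj q n"
  unfolding omega_term_def
  by (rule gen_bound[OF q w qpoch_lower2[OF q] qpoch_lower1[OF q w]]) simp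

lemma Cf_bound:
  assumes q: "norm q < 1" and w: "norm w \<le> (1 - norm q) / 2"
  shows "norm (Cf q w n) \<le> Mj q n"
proof -
  have e1: "w * q\<^sup>2 * q = w * q ^ 3" by (simp add: eval_nat_numeral)
  have "norm (qpoch (w * q ^ 3) (q\<^sup>2) n) \<ge> 1/2"
    using qpoch_lower1[OF q w2_bound[OF q w]] unfolding e1 .
  then show ?thesis unfolding Cf_def
    by (rule gen_bound[OF q w qpoch_lower2[OF q]]) simp
qed

lemma fe:
  assumes q: "norm q < 1" and w: "norm w \<le> (1 - norm q) / 2"
  shows "summable (omega_term w q) \<and> omega w q * (1 - w*q) = 1 + q * omega (w*q\<^sup>2) q"
proof -
  have sM: "summable (Mj q)" by (rule Mj_summable[OF q])
  have s1: "summable (omega_term w q)"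
    by (rule summable_comparison_test'[OF sM]) (use term_bound[OF q w] in auto)
  have s2: "summable (omega_term (w*q\<^sup>2) q)"
    by (rule summable_comparison_test'[OF sM]) (use term_bound[OF q w2_bound[OF q w]] in auto)
  have C0: "Cf q w \<longlonglongrightarrow> 0"
  proof (rule tendsto_0_le[where K=1])
    show "Mj q \<longlonglongrightarrow> 0" by (rule summable_LIMSEQ_zero[OF sM])
    show "\<forall>\<^sub>F n in sequentially. norm (Cf q w n) \<le> norm (Mj q n) * 1"
    proof (intro always_eventually allI)
      fix n
      have "0 \<le> Mj q n" using q by (simp add: Mj_def)
      then show "norm (Cf q w n) \<le> norm (Mj q n) * 1" using Cf_bound[OF q w, of n] by simp
    qed
  qed
  have "(\<lambda>n. Cf q w n - Cf q w (Suc n)) sums (Cf q w 0 - 0)" by (rule telescope_sums'[OF C0])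
  moreover have "Cf q w 0 = 1" by (simp add: Cf_def qpoch_def)
  ultimately have t: "(\<lambda>n. omega_term w q n * (1 - w*q) - q * omega_term (w*q\<^sup>2) q n) sums 1"
    using term_id[OF q w] by simp
  have "(\<lambda>n. omega_term w q n * (1 - w*q) - q * omega_term (w*q\<^sup>2) q n) sums
        (omega w q * (1 - w*q) - q * omega (w*q\<^sup>2) q)"
    unfolding omega_def
    by (intro sums_diff sums_mult2 sums_mult summable_sums s1 s2)
  then have "omega w q * (1 - w*q) - q * omega (w*q\<^sup>2) q = 1" using t by (rule sums_unique2)
  with s1 show ?thesis by (simp add: algebra_simps)
qed

lemma iter_alg:
  fixes a D t q Om :: complex
  assumes "D \<noteq> 0" "t \<noteq> 0"
  shows "a * ((1 + q * Om) / t) / D = a / (D * t) + q * a * Om / (D * t)"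
  using assms by (simp add: field_simps)

lemma iter:
  assumes q: "norm q < 1" and z: "norm z \<le> (1 - norm q) / 2"
  shows "omega z q = (\<Sum>n<N. q ^ n / qpoch (z * q) (q\<^sup>2) (n + 1))
                    + q ^ N * omega (z * (q\<^sup>2) ^ N) q / qpoch (z * q) (q\<^sup>2) N"
proof (induction N)
  case 0 then show ?case by (simp add: qpoch_def)
next
  case (Suc N)
  define w where "w = z * (q\<^sup>2) ^ N"
  define D where "D = qpoch (z * q) (q\<^sup>2) N"
  have w: "norm w \<le> (1 - norm q) / 2" unfolding w_def by (rule wpow_bound[OF q z])
  have e: "w * q\<^sup>2 = z * (q\<^sup>2) ^ Suc N" by (simp add: w_def mult_ac)
  have D1: "qpoch (z * q) (q\<^sup>2) (Suc N) = D * (1 - w * q)"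
    by (simp add: qpoch_Suc D_def w_def mult_ac)
  have nzD1: "D * (1 - w * q) \<noteq> 0"
    using qpoch_lower1[OF q z, of "Suc N"] D1 by auto
  then have nzD: "D \<noteq> 0" and nzt: "1 - w * q \<noteq> 0" by auto
  have fe1: "omega w q = (1 + q * omega (w * q\<^sup>2) q) / (1 - w * q)"
    using fe[OF q w] nzt by (simp add: field_simps)
  have "omega z q = (\<Sum>n<N. q ^ n / qpoch (z * q) (q\<^sup>2) (n + 1)) + q ^ N * omega w q / D"
    using Suc.IH by (simp add: w_def D_def)
  also have "q ^ N * omega w q / D = q ^ N / (D * (1 - w * q)) + q ^ Suc N * omega (w * q\<^sup>2) q / (D * (1 - w * q))"
    unfolding fe1 power_Suc by (rule iter_alg[OF nzD nzt])
  finally show ?case unfolding e D1[symmetric] by (simp add: add.assoc)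
qed

theorem theorem2p1:
  fixes q :: complex
  assumes "norm q < 1"
  shows "\<exists>r>0. \<forall>z::complex. norm z < r \<longrightarrow>
           summable (omega_term z q) \<and>
           (\<lambda>n. q ^ n / qpoch (z * q) (q\<^sup>2) (n + 1)) sums omega z q"
proof (intro exI[of _ "(1 - norm q) / 2"] conjI allI impI)
  have q: "norm q < 1" by (rule assms)
  show "0 < (1 - norm q) / 2" using q by simp
  fix z :: complex assume "norm z < (1 - norm q) / 2"
  then have z: "norm z \<le> (1 - norm q) / 2" by simp
  show "summable (omega_term z q)" using fe[OF q z] by simp
  define B where "B = suminf (Mj q)"
  define E where "E N = q ^ N * omega (z * (q\<^sup>2) ^ N) q / qpoch (z * q) (q\<^sup>2) N" for N
  have E0: "E \<longlonglongrightarrow> 0"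
  proof (rule tendsto_0_le[where K = "2 * B"])
    show "(\<lambda>N. q ^ N) \<longlonglongrightarrow> 0" by (rule LIMSEQ_power_zero[OF q])
    show "\<forall>\<^sub>F N in sequentially. norm (E N) \<le> norm (q ^ N) * (2 * B)"
    proof (intro always_eventually allI)
      fix N
      have wN: "norm (z * (q\<^sup>2) ^ N) \<le> (1 - norm q) / 2" by (rule wpow_bound[OF q z])
      have ob: "norm (omega (z * (q\<^sup>2) ^ N) q) \<le> B"
        unfolding omega_def B_def by (rule norm_suminf_le[OF term_bound[OF q wN] Mj_summable[OF q]])
      have B0: "0 \<le> B" using ob norm_ge_zero order_trans by blast
      have db: "norm (qpoch (z * q) (q\<^sup>2) N) \<ge> 1/2" by (rule qpoch_lower1[OF q z])
      have "norm (E N) = norm (q ^ N) * norm (omega (z * (q\<^sup>2) ^ N) q) / norm (qpoch (z * q) (q\<^sup>2) N)"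
        by (simp add: E_def norm_mult norm_divide)
      also have "\<dots> \<le> norm (q ^ N) * B / (1/2)"
        by (intro frac_le mult_left_mono ob db) (use B0 in auto)
      finally show "norm (E N) \<le> norm (q ^ N) * (2 * B)" by simp
    qed
  qed
  have "(\<lambda>N. omega z q - E N) \<longlonglongrightarrow> omega z q - 0"
    by (intro tendsto_diff tendsto_const E0)
  moreover have "\<And>N. omega z q - E N = (\<Sum>n<N. q ^ n / qpoch (z * q) (q\<^sup>2) (n + 1))"
  proof -
    fix N
    have "omega z q = (\<Sum>n<N. q ^ n / qpoch (z * q) (q\<^sup>2) (n + 1)) + E N"
      unfolding E_def by (rule iter[OF q z])
    then show "omega z q - E N = (\<Sum>n<N. q ^ n / qpoch (z * q) (q\<^sup>2) (n + 1))"
      by (metis add_diff_cancel_right')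
  qed
  ultimately show "(\<lambda>n. q ^ n / qpoch (z * q) (q\<^sup>2) (n + 1)) sums omega z q"
    unfolding sums_def by simp
qed

end
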